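(* For every finite game $G$, $\mathcal{X}^{CCE}\subseteq\mathcal{X}^{S\text{-}NF}$; that is, for every coarse correlated equilibrium $x$ of $G$ there exists a stable $\mathbf{x}=[x_\pi]$ of the Stackelberg game $(G,N,\emptyset)$ with $x_\varnothing=x$.
   Context: A finite game is $G=(N,\{S_p\}_{p\in N},\{u_p\}_{p\in N})$ with players $N=\{1,\dots,n\}$, finite nonempty strategy sets $S_p$, and utilities $u_p:S\to\mathbb{R}$ on $S=\prod_{p\in N}S_p$; write $s=(s_p,s_{-p})$ with $s_{-p}\in S_{-p}=\prod_{q\neq p}S_q$. $\mathcal{X}=\Delta(S)$ is the set of probability distributions on $S$ and $u_p(x)=\sum_{s\in S}x(s)u_p(s)$ for $x\in\mathcal{X}$. For $P\subseteq N$, $\mathcal{X}^{CE}_P$ is the set of $x\in\mathcal{X}$ such that for every $p\in P$ and all $s_p\neq s_p'\in S_p$: $\sum_{s_{-p}\in S_{-p}} x(s_p,s_{-p})\,(u_p(s_p,s_{-p})-u_p(s_p',s_{-p}))\ge 0$; $\mathcal{X}^{CE}=\mathcal{X}^{CE}_N$ is the set of correlated equilibria of $G$. $\mathcal{X}^{CCE}$ is the set of coarse correlated equilibria of $G$: $x\in\mathcal{X}$ with $\sum_{s\in S}x(s)(u_p(s)-u_p(s_p',s_{-p}))\ge 0$ for all $p\in N$, $s_p'\in S_p$. A Stackelberg game (SG) is a triple $(G,L,F)$ with $L\cup F=N$ and $L\cap F=\emptyset$ (leaders and followers). For $P\subseteq N$, $\Pi_P$ is the set of ordered subsets of $P$ (finite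 sequences of pairwise distinct elements of $P$, including the empty sequence $\varnothing$); for $\pi\in\Pi_P$ and $p\in P$ not occurring in $\pi$, $\pi p$ is $\pi$ with $p$ appended; when used as a set, $\pi$ means its set of entries. $\mathbf{X}=\prod_{\pi\in\Pi_L}\mathcal{X}^{CE}_{\pi\cup F}$, with elements $\mathbf{x}=[x_\pi]_{\pi\in\Pi_L}$. For $\mathbf{x}\in\mathbf{X}$ and $\pi\in\Pi_L$, $x_\pi$ is stable if $u_p(x_\pi)\ge u_p(x_{\pi p})$ for all $p\in L\setminus\pi$; $\mathbf{x}$ is stable if $x_\varnothing$ is stable, and perfectly stable if $x_\pi$ is stable for every $\pi\in\Pi_L$; $\mathbf{X}^{S}$ and $\mathbf{X}^{PS}$ denote the sets of stable and perfectly stable elements of $\mathbf{X}$. $\mathcal{X}^{S\text{-}NF}=\{x_\varnothing:\mathbf{x}\in\mathbf{X}^S\}$ computed for the SG $(G,N,\emptyset)$ in which every player is a leader. *)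

theory Defs
  imports Complex_Main "HOL-Library.FuncSet"
begin

text \<open>A (correlated) distribution x on profiles is a function profile \<Rightarrow> real, considered on the
profile set only.\<close>

definition finite_game :: "'p set \<Rightarrow> ('p \<Rightarrow> 's set) \<Rightarrow> bool" where
  "finite_game N S \<longleftrightarrow> finite N \<and> (\<forall>p\<in>N. finite (S p) \<and> S p \<noteq> {})"

definition profiles :: "'p set \<Rightarrow> ('p \<Rightarrow> 's set) \<Rightarrow> ('p \<Rightarrow> 's) set" where
  "profiles N S = PiE N S"

definition distributions :: "'p set \<Rightarrow> ('p \<Rightarrow> 's set) \<Rightarrow> (('p \<Rightarrow> 's) \<Rightarrow> real) set" where
  "distributions N S = {x. (\<forall>s\<in>profiles N S. 0 \<le> x s) \<and> (\<Sum>s\<in>profiles N S. x s) = 1}"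

definition exp_util ::
  "'p set \<Rightarrow> ('p \<Rightarrow> 's set) \<Rightarrow> ('p \<Rightarrow> ('p \<Rightarrow> 's) \<Rightarrow> real) \<Rightarrow> 'p \<Rightarrow> (('p \<Rightarrow> 's) \<Rightarrow> real) \<Rightarrow> real" where
  "exp_util N S u p x = (\<Sum>s\<in>profiles N S. x s * u p s)"

text \<open>X^CE_P: the CE constraints imposed only for players in P.
 Summing over s_{-p} with s_p fixed is summing over profiles s with s p = a.\<close>
definition CE_P ::
  "'p set \<Rightarrow> ('p \<Rightarrow> 's set) \<Rightarrow> ('p \<Rightarrow> ('p \<Rightarrow> 's) \<Rightarrow> real) \<Rightarrow> 'p set \<Rightarrow> (('p \<Rightarrow> 's) \<Rightarrow> real) set" where
  "CE_P N S u P = {x \<in> distributions N S.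
     \<forall>p\<in>P. \<forall>a\<in>S p. \<forall>b\<in>S p. a \<noteq> b \<longrightarrow>
       0 \<le> (\<Sum>s\<in>{s\<in>profiles N S. s p = a}. x s * (u p s - u p (s(p := b))))}"

definition CCE ::
  "'p set \<Rightarrow> ('p \<Rightarrow> 's set) \<Rightarrow> ('p \<Rightarrow> ('p \<Rightarrow> 's) \<Rightarrow> real) \<Rightarrow> (('p \<Rightarrow> 's) \<Rightarrow> real) set" where
  "CCE N S u = {x \<in> distributions N S.
     \<forall>p\<in>N. \<forall>b\<in>S p. 0 \<le> (\<Sum>s\<in>profiles N S. x s * (u p s - u p (s(p := b))))}"

definition ordered_subsets :: "'p set \<Rightarrow> 'p list set" where
  "ordered_subsets P = {\<pi>. distinct \<pi> \<and> set \<pi> \<subseteq> P}"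

definition SG_X ::
  "'p set \<Rightarrow> ('p \<Rightarrow> 's set) \<Rightarrow> ('p \<Rightarrow> ('p \<Rightarrow> 's) \<Rightarrow> real) \<Rightarrow> 'p set \<Rightarrow> 'p set
    \<Rightarrow> ('p list \<Rightarrow> ('p \<Rightarrow> 's) \<Rightarrow> real) set" where
  "SG_X N S u L F = {xx. \<forall>\<pi>\<in>ordered_subsets L. xx \<pi> \<in> CE_P N S u (set \<pi> \<union> F)}"

definition stable_at ::
  "'p set \<Rightarrow> ('p \<Rightarrow> 's set) \<Rightarrow> ('p \<Rightarrow> ('p \<Rightarrow> 's) \<Rightarrow> real) \<Rightarrow> 'p set
    \<Rightarrow> ('p list \<Rightarrow> ('p \<Rightarrow> 's) \<Rightarrow> real) \<Rightarrow> 'p list \<Rightarrow> bool" where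
  "stable_at N S u L xx \<pi> \<longleftrightarrow>
     (\<forall>p\<in>L - set \<pi>. exp_util N S u p (xx \<pi>) \<ge> exp_util N S u p (xx (\<pi> @ [p])))"

definition SG_X_stable ::
  "'p set \<Rightarrow> ('p \<Rightarrow> 's set) \<Rightarrow> ('p \<Rightarrow> ('p \<Rightarrow> 's) \<Rightarrow> real) \<Rightarrow> 'p set \<Rightarrow> 'p set
    \<Rightarrow> ('p list \<Rightarrow> ('p \<Rightarrow> 's) \<Rightarrow> real) set" where
  "SG_X_stable N S u L F = {xx \<in> SG_X N S u L F. stable_at N S u L xx []}"

definition S_NF ::
  "'p set \<Rightarrow> ('p \<Rightarrow> 's set) \<Rightarrow> ('p \<Rightarrow> ('p \<Rightarrow> 's) \<Rightarrow> real) \<Rightarrow> (('p \<Rightarrow> 's) \<Rightarrow> real) set" where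
  "S_NF N S u = {xx [] | xx. xx \<in> SG_X_stable N S u N {}}"

end

theory Submission
  imports Defs
begin


lemma aux1: "(a::real) < 0 \<Longrightarrow> 0 < b \<Longrightarrow> b * x + (-a) * y < 0 \<Longrightarrow> x / (-a) < - y / b"
proof -
  assume h: "a < 0" "0 < b" "b * x + (-a) * y < 0"
  have "x / (-a) = (x * b) / ((-a) * b)" using h by (simp add: mult_neg_pos)
  moreover have "- y / b = (-y * (-a)) / ((-a) * b)" using h by simp
  moreover have "x * b < -y * (-a)" using h(3) by (simp add: algebra_simps)
  moreover have "0 < (-a) * b" using h by (simp add: mult_neg_pos)
  ultimately show ?thesis by (metis divide_strict_right_mono)
qed
lemma aux2: "(a::real) < 0 \<Longrightarrow> 0 \<le> b \<Longrightarrow> (b / (b - a)) * x + (- a / (b - a)) * y < 0 \<Longrightarrow> b * x + (-a) * y < 0"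
proof -
  assume h: "a < 0" "0 \<le> b" "(b / (b - a)) * x + (- a / (b - a)) * y < 0"
  have d: "0 < b - a" using h by simp
  have e1: "(b - a) * (b / (b - a)) = b" "(b - a) * (- a / (b - a)) = -a" using d by simp_all
  have "(b - a) * ((b / (b - a)) * x + (- a / (b - a)) * y) = ((b - a) * (b / (b - a))) * x + ((b - a) * (- a / (b - a))) * y"
    by (simp only: distrib_left mult.assoc)
  then have "(b - a) * ((b / (b - a)) * x + (- a / (b - a)) * y) = b * x + (-a) * y"
    using e1 by simp
  moreover have "(b - a) * ((b / (b - a)) * x + (- a / (b - a)) * y) < 0"
    using d h(3) by (simp add: mult_pos_neg)
  ultimately show ?thesis by simp
qed

lemma cc_trans:
  fixes V V' :: "('i \<Rightarrow> real) set" and q' :: "('i \<Rightarrow> real) \<Rightarrow> real"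
  assumes fin: "finite V" "finite V'"
    and r: "\<forall>v'\<in>V'. (\<forall>v\<in>V. 0 \<le> r v' v) \<and> sum (r v') V = 1 \<and> (\<forall>i. v' i = (\<Sum>v\<in>V. r v' v * v i))"
    and q': "\<forall>v'\<in>V'. 0 \<le> q' v'" "sum q' V' = 1"
  shows "\<exists>q. (\<forall>v\<in>V. 0 \<le> q v) \<and> sum q V = 1 \<and> (\<forall>i. (\<Sum>v'\<in>V'. q' v' * v' i) = (\<Sum>v\<in>V. q v * v i))"
proof (intro exI[of _ "\<lambda>v. \<Sum>v'\<in>V'. q' v' * r v' v"] conjI ballI allI)
  fix v assume "v \<in> V" thus "0 \<le> (\<Sum>v'\<in>V'. q' v' * r v' v)"
    using r q' by (intro sum_nonneg) auto
next
  have "(\<Sum>v\<in>V. \<Sum>v'\<in>V'. q' v' * r v' v) = (\<Sum>v'\<in>V'. q' v' * sum (r v') V)"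
    by (subst sum.swap) (simp add: sum_distrib_left)
  also have "\<dots> = sum q' V'" using r by (intro sum.cong) auto
  finally show "(\<Sum>v\<in>V. \<Sum>v'\<in>V'. q' v' * r v' v) = 1" using q' by simp
next
  fix i
  have "(\<Sum>v\<in>V. (\<Sum>v'\<in>V'. q' v' * r v' v) * v i) = (\<Sum>v'\<in>V'. q' v' * (\<Sum>v\<in>V. r v' v * v i))"
    by (simp add: sum_distrib_right sum_distrib_left mult.assoc) (subst sum.swap, simp)
  also have "\<dots> = (\<Sum>v'\<in>V'. q' v' * v' i)" using r by (intro sum.cong) auto
  finally show "(\<Sum>v'\<in>V'. q' v' * v' i) = (\<Sum>v\<in>V. (\<Sum>v'\<in>V'. q' v' * r v' v) * v i)" by simp
qed

lemma ville_set:
  fixes I :: "'i set" and V :: "('i \<Rightarrow> real) set"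
  assumes "finite I"
  shows "finite V \<Longrightarrow> V \<noteq> {} \<Longrightarrow>
    (\<exists>q. (\<forall>v\<in>V. 0 \<le> q v) \<and> sum q V = 1 \<and> (\<forall>i\<in>I. 0 \<le> (\<Sum>v\<in>V. q v * v i)))
    \<or> (\<exists>y. (\<forall>i\<in>I. 0 \<le> y i) \<and> (\<forall>v\<in>V. (\<Sum>i\<in>I. y i * v i) < 0))"
  using assms
proof (induction I arbitrary: V rule: finite_induct)
  case empty
  then obtain v0 where "v0 \<in> V" by blast
  then show ?case using empty
    by (intro disjI1 exI[of _ "\<lambda>v. if v = v0 then 1 else 0"]) (auto simp: sum.delta)
next
  case (insert i0 I V)
  define Vp where "Vp = {v\<in>V. 0 \<le> v i0}"
  define Vm where "Vm = {v\<in>V. v i0 < 0}"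
  have finVp: "finite Vp" "finite Vm" using insert by (auto simp: Vp_def Vm_def)
  show ?case
  proof (cases "Vp = {}")
    case True
    have "\<forall>v\<in>V. (\<Sum>i\<in>insert i0 I. (if i = i0 then 1 else 0) * v i) < 0"
    proof
      fix v assume "v \<in> V"
      then have "v i0 < 0" using True by (auto simp: Vp_def)
      moreover have "(\<Sum>i\<in>insert i0 I. (if i = i0 then 1 else 0) * v i) = v i0"
        using insert.hyps by (subst sum.insert) (auto intro!: sum.neutral)
      ultimately show "(\<Sum>i\<in>insert i0 I. (if i = i0 then 1 else 0) * v i) < 0" by simp
    qed
    then show ?thesis by (intro disjI2 exI[of _ "\<lambda>i. if i = i0 then 1 else 0"]) auto
  next
    case False
    define cmb where "cmb = (\<lambda>(v::'i \<Rightarrow> real, w::'i \<Rightarrow> real) i. (w i0 / (w i0 - v i0)) * v i + (- v i0 / (w i0 - v i0)) * w i)"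
    define V' where "V' = Vp \<union> cmb ` (Vm \<times> Vp)"
    have finV': "finite V'" using finVp by (simp add: V'_def)
    have neV': "V' \<noteq> {}" using False by (simp add: V'_def)
    have cmb0: "cmb (v, w) i0 = 0" if "v \<in> Vm" "w \<in> Vp" for v w
    proof -
      have "w i0 - v i0 > 0" using that by (auto simp: Vp_def Vm_def)
      then show ?thesis by (simp add: cmb_def field_simps)
    qed
    have V'nn: "0 \<le> v' i0" if "v' \<in> V'" for v'
      using that cmb0 by (auto simp: V'_def Vp_def)
    from insert.IH[OF finV' neV']
    show ?thesis
    proof
      assume "\<exists>q. (\<forall>v\<in>V'. 0 \<le> q v) \<and> sum q V' = 1 \<and> (\<forall>i\<in>I. 0 \<le> (\<Sum>v\<in>V'. q v * v i))"
      then obtain q' where q': "\<forall>v\<in>V'. 0 \<le> q' v" "sum q' V' = 1" "\<forall>i\<in>I. 0 \<le> (\<Sum>v\<in>V'. q' v * v i)"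
        by blast
      have "\<forall>v'\<in>V'. \<exists>r. (\<forall>v\<in>V. 0 \<le> r v) \<and> sum r V = 1 \<and> (\<forall>i. v' i = (\<Sum>v\<in>V. r v * v i))"
      proof
        fix v' assume "v' \<in> V'"
        then consider "v' \<in> Vp" | v w where "v \<in> Vm" "w \<in> Vp" "v' = cmb (v, w)"
          by (auto simp: V'_def)
        then show "\<exists>r. (\<forall>v\<in>V. 0 \<le> r v) \<and> sum r V = 1 \<and> (\<forall>i. v' i = (\<Sum>v\<in>V. r v * v i))"
        proof cases
          case 1
          then have "v' \<in> V" by (simp add: Vp_def)
          then show ?thesis using insert.prems
            by (intro exI[of _ "\<lambda>v. if v = v' then 1 else 0"]) (auto simp: sum.delta if_distrib[of "\<lambda>c. c * _"] cong: if_cong)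
        next
          case 2
          have vw: "v \<in> V" "w \<in> V" "v i0 < 0" "0 \<le> w i0" using 2 by (auto simp: Vp_def Vm_def)
          then have ne: "v \<noteq> w" by auto
          have d: "w i0 - v i0 > 0" using vw by simp
          define r where "r = (\<lambda>u. (if u = v then w i0 / (w i0 - v i0) else 0) + (if u = w then - v i0 / (w i0 - v i0) else 0))"
          have "\<forall>u\<in>V. 0 \<le> r u" using d vw by (auto simp: r_def divide_nonpos_pos)
          moreover have "sum r V = 1"
          proof -
            have "sum r V = w i0 / (w i0 - v i0) + - v i0 / (w i0 - v i0)"
              using vw insert.prems by (simp add: r_def sum.distrib sum.delta)
            also have "\<dots> = 1" using d by (simp add: diff_divide_distrib[symmetric])
            finally show ?thesis .
          qed
          moreover have "\<forall>i. v' i = (\<Sum>u\<in>V. r u * u i)"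
          proof
            fix i
            have "(\<Sum>u\<in>V. r u * u i) = (\<Sum>u\<in>V. (if u = v then w i0 / (w i0 - v i0) * v i else 0) + (if u = w then - v i0 / (w i0 - v i0) * w i else 0))"
              by (intro sum.cong) (auto simp: r_def distrib_right)
            also have "\<dots> = w i0 / (w i0 - v i0) * v i + - v i0 / (w i0 - v i0) * w i"
              using vw insert.prems by (simp add: sum.distrib sum.delta)
            finally show "v' i = (\<Sum>u\<in>V. r u * u i)" using 2 by (simp add: cmb_def)
          qed
          ultimately show ?thesis by blast
        qed
      qed
      from bchoice[OF this] obtain r where "\<forall>v'\<in>V'. (\<forall>v\<in>V. 0 \<le> r v' v) \<and> sum (r v') V = 1 \<and> (\<forall>i. v' i = (\<Sum>v\<in>V. r v' v * v i))"
        by blast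
      from cc_trans[OF insert.prems(1) finV' this q'(1,2)]
      obtain q where q: "\<forall>v\<in>V. 0 \<le> q v" "sum q V = 1" "\<forall>i. (\<Sum>v'\<in>V'. q' v' * v' i) = (\<Sum>v\<in>V. q v * v i)"
        by blast
      have "\<forall>i\<in>insert i0 I. 0 \<le> (\<Sum>v\<in>V. q v * v i)"
      proof
        fix i assume "i \<in> insert i0 I"
        then show "0 \<le> (\<Sum>v\<in>V. q v * v i)"
        proof
          assume "i = i0"
          have "0 \<le> (\<Sum>v'\<in>V'. q' v' * v' i0)" using q'(1) V'nn by (intro sum_nonneg) auto
          then show ?thesis using q(3) \<open>i = i0\<close> by simp
        next
          assume "i \<in> I" then show ?thesis using q(3) q'(3) by simp
        qed
      qed
      then show ?thesis using q by blast
    next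
      assume "\<exists>y. (\<forall>i\<in>I. 0 \<le> y i) \<and> (\<forall>v\<in>V'. (\<Sum>i\<in>I. y i * v i) < 0)"
      then obtain y' where y': "\<forall>i\<in>I. 0 \<le> y' i" "\<forall>v\<in>V'. (\<Sum>i\<in>I. y' i * v i) < 0" by blast
      define L where "L = (\<lambda>v. \<Sum>i\<in>I. y' i * v i)"
      have Lneg: "L v < 0" if "v \<in> V'" for v using y' that by (simp add: L_def)
      have Lcmb: "L (cmb (v, w)) = (w i0 / (w i0 - v i0)) * L v + (- v i0 / (w i0 - v i0)) * L w" for v w
      proof -
        define \<alpha> where "\<alpha> = w i0 / (w i0 - v i0)"
        define \<beta> where "\<beta> = - v i0 / (w i0 - v i0)"
        have c: "cmb (v, w) = (\<lambda>i. \<alpha> * v i + \<beta> * w i)" by (simp add: cmb_def \<alpha>_def \<beta>_def)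
        have "L (cmb (v, w)) = (\<Sum>i\<in>I. \<alpha> * (y' i * v i) + \<beta> * (y' i * w i))"
          unfolding L_def c by (intro sum.cong refl) (simp only: distrib_left mult.assoc mult.left_commute)
        also have "\<dots> = \<alpha> * L v + \<beta> * L w"
          by (simp only: sum.distrib sum_distrib_left[symmetric] L_def)
        finally show ?thesis by (simp only: \<alpha>_def \<beta>_def)
      qed
      define loS where "loS = insert 0 ((\<lambda>v. L v / (- v i0)) ` Vm)"
      define hiS where "hiS = (\<lambda>w. - L w / w i0) ` {w\<in>Vp. 0 < w i0}"
      define lo where "lo = Max loS"
      have finlo: "finite loS" "loS \<noteq> {}" using finVp by (auto simp: loS_def)
      have finhi: "finite hiS" using finVp by (auto simp: hiS_def)
      have lo0: "0 \<le> lo" unfolding lo_def using finlo by (intro Max_ge) (auto simp: loS_def)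
      have lov: "L v / (- v i0) \<le> lo" if "v \<in> Vm" for v
        unfolding lo_def using finlo that by (intro Max_ge) (auto simp: loS_def)
      have lohi: "lo < Min hiS" if "hiS \<noteq> {}"
      proof -
        have "\<forall>a\<in>loS. \<forall>b\<in>hiS. a < b"
        proof (intro ballI)
          fix a b assume a: "a \<in> loS" and b: "b \<in> hiS"
          from b obtain w where w: "w \<in> Vp" "0 < w i0" "b = - L w / w i0" by (auto simp: hiS_def)
          have Lw: "L w < 0" using w Lneg by (auto simp: V'_def)
          show "a < b"
          proof (cases "a = 0")
            case True then show ?thesis using w Lw by (simp add: divide_neg_pos)
          next
            case False
            then obtain v where v: "v \<in> Vm" "a = L v / (- v i0)" using a by (auto simp: loS_def)
            have v0: "v i0 < 0" using v by (simp add: Vm_def)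
            have "L (cmb (v, w)) < 0" using Lneg v w by (auto simp: V'_def)
            then have "(w i0 / (w i0 - v i0)) * L v + (- v i0 / (w i0 - v i0)) * L w < 0" by (simp add: Lcmb)
            then have "w i0 * L v + (- v i0) * L w < 0" using v0 w(2)
              by (intro aux2) auto
            then show ?thesis using v0 w(2) v w(3) aux1 by metis
          qed
        qed
        then show ?thesis unfolding lo_def using finlo finhi that
          by (simp add: Max_less_iff Min_gr_iff)
      qed
      define t where "t = (if hiS = {} then lo + 1 else (lo + Min hiS) / 2)"
      have tlo: "lo < t" using lohi by (auto simp: t_def)
      have thi: "t < Min hiS" if "hiS \<noteq> {}" using lohi that by (auto simp: t_def)
      define y where "y = y'(i0 := t)"
      have ysum: "(\<Sum>i\<in>insert i0 I. y i * v i) = t * v i0 + L v" for v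
      proof -
        have "(\<Sum>i\<in>I. y i * v i) = L v" unfolding L_def y_def using insert.hyps
          by (intro sum.cong) auto
        then show ?thesis using insert.hyps by (simp add: y_def)
      qed
      have "\<forall>v\<in>V. (\<Sum>i\<in>insert i0 I. y i * v i) < 0"
      proof
        fix v assume vV: "v \<in> V"
        show "(\<Sum>i\<in>insert i0 I. y i * v i) < 0"
        proof (cases "v i0 < 0")
          case True
          then have "v \<in> Vm" using vV by (simp add: Vm_def)
          then have "L v / (- v i0) < t" using lov tlo by (meson le_less_trans)
          moreover have "0 < - v i0" using True by simp
          ultimately have "L v < t * (- v i0)" using pos_divide_less_eq by blast
          then show ?thesis by (simp add: ysum)
        next
          case False
          then have vp: "v \<in> Vp" using vV by (simp add: Vp_def)
          then have Lv: "L v < 0" using Lneg by (auto simp: V'_def)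
          show ?thesis
          proof (cases "v i0 = 0")
            case True then show ?thesis using Lv by (simp add: ysum)
          next
            case False
            then have pos: "0 < v i0" using vp by (simp add: Vp_def)
            then have inh: "- L v / v i0 \<in> hiS" using vp by (auto simp: hiS_def)
            then have "Min hiS \<le> - L v / v i0" using finhi by (intro Min_le)
            then have "t < - L v / v i0" using thi inh by fastforce
            then have "t * v i0 < - L v" using pos pos_less_divide_eq by blast
            then show ?thesis by (simp add: ysum)
          qed
        qed
      qed
      moreover have "\<forall>i\<in>insert i0 I. 0 \<le> y i" using y' lo0 tlo by (auto simp: y_def)
      ultimately show ?thesis by blast
    qed
  qed
qed


lemma ville:
  fixes I :: "'i set" and J :: "'j set" and A :: "'j \<Rightarrow> 'i \<Rightarrow> real"
  assumes I: "finite I" and J: "finite J" "J \<noteq> {}"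
  shows "(\<exists>x. (\<forall>j\<in>J. 0 \<le> x j) \<and> sum x J = 1 \<and> (\<forall>i\<in>I. 0 \<le> (\<Sum>j\<in>J. x j * A j i)))
    \<or> (\<exists>y. (\<forall>i\<in>I. 0 \<le> y i) \<and> (\<forall>j\<in>J. (\<Sum>i\<in>I. y i * A j i) < 0))"
proof -
  have fin: "finite (A ` J)" "A ` J \<noteq> {}" using J by auto
  from ville_set[OF I fin] show ?thesis
  proof
    assume "\<exists>q. (\<forall>v\<in>A ` J. 0 \<le> q v) \<and> sum q (A ` J) = 1 \<and> (\<forall>i\<in>I. 0 \<le> (\<Sum>v\<in>A ` J. q v * v i))"
    then obtain q where q: "\<forall>v\<in>A ` J. 0 \<le> q v" "sum q (A ` J) = 1" "\<forall>i\<in>I. 0 \<le> (\<Sum>v\<in>A ` J. q v * v i)"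
      by blast
    define c where "c j = real (card {j'\<in>J. A j' = A j})" for j
    have cpos: "0 < c j" if "j \<in> J" for j
    proof -
      have "{j'\<in>J. A j' = A j} \<noteq> {}" using that by blast
      moreover have "finite {j'\<in>J. A j' = A j}" using J by simp
      ultimately show ?thesis by (simp add: c_def card_gt_0_iff)
    qed
    have key: "(\<Sum>j\<in>J. q (A j) / c j * h (A j)) = (\<Sum>v\<in>A ` J. q v * h v)" for h :: "('i \<Rightarrow> real) \<Rightarrow> real"
    proof -
      have "(\<Sum>j\<in>J. q (A j) / c j * h (A j)) = (\<Sum>v\<in>A ` J. \<Sum>j\<in>{j\<in>J. A j = v}. q (A j) / c j * h (A j))"
        using J(1) by (rule sum.image_gen)
      also have "\<dots> = (\<Sum>v\<in>A ` J. q v * h v)"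
      proof (rule sum.cong[OF refl])
        fix v assume "v \<in> A ` J"
        then obtain j0 where j0: "j0 \<in> J" "A j0 = v" by blast
        have "(\<Sum>j\<in>{j\<in>J. A j = v}. q (A j) / c j * h (A j)) = (\<Sum>j\<in>{j\<in>J. A j = v}. q v / c j0 * h v)"
          by (intro sum.cong) (auto simp: c_def j0(2))
        also have "\<dots> = c j0 * (q v / c j0 * h v)" by (simp add: c_def j0(2))
        also have "\<dots> = q v * h v" using cpos[OF j0(1)] by simp
        finally show "(\<Sum>j\<in>{j\<in>J. A j = v}. q (A j) / c j * h (A j)) = q v * h v" .
      qed
      finally show ?thesis .
    qed
    have "\<forall>j\<in>J. 0 \<le> q (A j) / c j" using q(1) cpos by (auto intro: divide_nonneg_pos)
    moreover have "(\<Sum>j\<in>J. q (A j) / c j) = 1" using key[of "\<lambda>_. 1"] q(2) by simp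
    moreover have "\<forall>i\<in>I. 0 \<le> (\<Sum>j\<in>J. q (A j) / c j * A j i)" using key[of "\<lambda>v. v i" for i] q(3) by simp
    ultimately show ?thesis by (intro disjI1 exI[of _ "\<lambda>j. q (A j) / c j"]) blast
  next
    assume "\<exists>y. (\<forall>i\<in>I. 0 \<le> y i) \<and> (\<forall>v\<in>A ` J. (\<Sum>i\<in>I. y i * v i) < 0)"
    then show ?thesis by blast
  qed
qed

lemma sum_if_sub1:
  fixes f g :: "'a \<Rightarrow> real"
  assumes "finite T" "a \<in> T"
  shows "(\<Sum>b\<in>T. f b * (g b - (if a = b then c else 0))) = (\<Sum>b\<in>T. f b * g b) - f a * c"
proof -
  have "(\<Sum>b\<in>T. f b * (g b - (if a = b then c else 0))) = (\<Sum>b\<in>T. f b * g b - (if a = b then f a * c else 0))"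
    by (intro sum.cong) (auto simp: right_diff_distrib)
  also have "\<dots> = (\<Sum>b\<in>T. f b * g b) - (\<Sum>b\<in>T. (if a = b then f a * c else 0))"
    by (rule sum_subtractf)
  also have "(\<Sum>b\<in>T. (if a = b then f a * c else 0)) = f a * c" using assms by (simp add: sum.delta)
  finally show ?thesis .
qed

lemma sum_if_sub2:
  fixes f g h :: "'a \<Rightarrow> real"
  assumes "finite T" "b \<in> T"
  shows "(\<Sum>a\<in>T. f a * (g a - (if a = b then h a else 0))) = (\<Sum>a\<in>T. f a * g a) - f b * h b"
proof -
  have "(\<Sum>a\<in>T. f a * (g a - (if a = b then h a else 0))) = (\<Sum>a\<in>T. f a * g a - (if a = b then f b * h b else 0))"
    by (intro sum.cong) (auto simp: right_diff_distrib)
  also have "\<dots> = (\<Sum>a\<in>T. f a * g a) - (\<Sum>a\<in>T. (if a = b then f b * h b else 0))"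
    by (rule sum_subtractf)
  also have "(\<Sum>a\<in>T. (if a = b then f b * h b else 0)) = f b * h b" using assms by (simp add: sum.delta)
  finally show ?thesis .
qed

lemma stationary:
  fixes T :: "'s set" and w :: "'s \<Rightarrow> 's \<Rightarrow> real"
  assumes T: "finite T" "T \<noteq> {}" and w: "\<forall>a\<in>T. \<forall>b\<in>T. 0 \<le> w a b"
  shows "\<exists>q. (\<forall>a\<in>T. 0 \<le> q a) \<and> sum q T = 1 \<and> (\<forall>b\<in>T. (\<Sum>a\<in>T. q a * w a b) = q b * (\<Sum>c\<in>T. w b c))"
proof -
  define W where "W a = (\<Sum>c\<in>T. w a c)" for a
  define A where "A a b = w a b - (if a = b then W a else 0)" for a b
  from ville[OF T(1) T, of A] show ?thesis
  proof
    assume "\<exists>x. (\<forall>j\<in>T. 0 \<le> x j) \<and> sum x T = 1 \<and> (\<forall>i\<in>T. 0 \<le> (\<Sum>j\<in>T. x j * A j i))"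
    then obtain x where x: "\<forall>j\<in>T. 0 \<le> x j" "sum x T = 1" "\<forall>i\<in>T. 0 \<le> (\<Sum>j\<in>T. x j * A j i)" by blast
    define z where "z b = (\<Sum>a\<in>T. x a * A a b)" for b
    have zeq: "z b = (\<Sum>a\<in>T. x a * w a b) - x b * W b" if "b \<in> T" for b
      unfolding z_def A_def using sum_if_sub2[OF T(1) that, of x "\<lambda>a. w a b" W] by simp
    have rowA: "(\<Sum>b\<in>T. A a b) = 0" if "a \<in> T" for a
      using sum_if_sub1[OF T(1) that, of "\<lambda>_. 1" "w a" "W a"] by (simp add: A_def W_def)
    have "sum z T = (\<Sum>a\<in>T. x a * (\<Sum>b\<in>T. A a b))"
      unfolding z_def by (subst sum.swap) (simp add: sum_distrib_left)
    also have "\<dots> = 0" using rowA by simp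
    finally have "sum z T = 0" .
    moreover have "\<forall>b\<in>T. 0 \<le> z b" using x(3) by (simp add: z_def)
    ultimately have "\<forall>b\<in>T. z b = 0" using sum_nonneg_eq_0_iff[OF T(1)] by blast
    then have "\<forall>b\<in>T. (\<Sum>a\<in>T. x a * w a b) = x b * (\<Sum>c\<in>T. w b c)" using zeq by (simp add: W_def)
    then show ?thesis using x by blast
  next
    assume "\<exists>y. (\<forall>i\<in>T. 0 \<le> y i) \<and> (\<forall>j\<in>T. (\<Sum>i\<in>T. y i * A j i) < 0)"
    then obtain y where y: "\<forall>i\<in>T. 0 \<le> y i" "\<forall>j\<in>T. (\<Sum>i\<in>T. y i * A j i) < 0" by blast
    have "Min (y ` T) \<in> y ` T" using T by simp
    then obtain a0 where a0: "a0 \<in> T" "y a0 = Min (y ` T)" by auto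
    have ymin: "y a0 \<le> y b" if "b \<in> T" for b using a0 T that by simp
    have "(\<Sum>i\<in>T. y i * A a0 i) = (\<Sum>i\<in>T. y i * w a0 i) - y a0 * W a0"
      unfolding A_def using sum_if_sub1[OF T(1) a0(1), of y "w a0" "W a0"] by simp
    also have "\<dots> = (\<Sum>i\<in>T. w a0 i * (y i - y a0))"
      by (simp add: W_def sum_distrib_left sum_subtractf algebra_simps)
    also have "\<dots> \<ge> 0" using w a0 ymin by (intro sum_nonneg) auto
    finally show ?thesis using y(2) a0(1) by force
  qed
qed

lemma sum_PiE_split:
  assumes "finite N" "p \<in> N" "\<forall>q\<in>N. finite (S q)"
  shows "(\<Sum>s\<in>PiE N S. f s) = (\<Sum>a\<in>S p. \<Sum>g\<in>PiE (N - {p}) S. f (g(p := a)))"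
proof -
  have N: "N = insert p (N - {p})" using assms by auto
  have "(\<Sum>s\<in>PiE N S. f s) = (\<Sum>s\<in>PiE (insert p (N - {p})) S. f s)" using N by simp
  also have "\<dots> = (\<Sum>(a,g)\<in>S p \<times> PiE (N - {p}) S. f (g(p := a)))"
    by (intro sum.reindex_bij_witness[of _ "\<lambda>(y,g). g(p := y)" "\<lambda>g. (g p, g(p := undefined))"])
       (auto simp: PiE_def extensional_def)
  also have "\<dots> = (\<Sum>a\<in>S p. \<Sum>g\<in>PiE (N - {p}) S. f (g(p := a)))"
    by (subst sum.cartesian_product) auto
  finally show ?thesis .
qed

lemma stat_zero:
  fixes q U :: "'s \<Rightarrow> real" and w :: "'s \<Rightarrow> 's \<Rightarrow> real"
  assumes "finite T" "\<forall>b\<in>T. (\<Sum>a\<in>T. q a * w a b) = q b * (\<Sum>c\<in>T. w b c)"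
  shows "(\<Sum>a\<in>T. \<Sum>b\<in>T. q a * w a b * (U a - U b)) = 0"
proof -
  have "(\<Sum>a\<in>T. \<Sum>b\<in>T. q a * w a b * (U a - U b))
      = (\<Sum>a\<in>T. \<Sum>b\<in>T. q a * w a b * U a) - (\<Sum>a\<in>T. \<Sum>b\<in>T. q a * w a b * U b)"
    by (simp add: right_diff_distrib sum_subtractf)
  also have "(\<Sum>a\<in>T. \<Sum>b\<in>T. q a * w a b * U a) = (\<Sum>a\<in>T. q a * U a * (\<Sum>c\<in>T. w a c))"
    by (simp add: sum_distrib_left mult_ac)
  also have "(\<Sum>a\<in>T. \<Sum>b\<in>T. q a * w a b * U b) = (\<Sum>b\<in>T. U b * (\<Sum>a\<in>T. q a * w a b))"
    by (subst sum.swap) (simp add: sum_distrib_left mult_ac)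
  also have "\<dots> = (\<Sum>b\<in>T. U b * (q b * (\<Sum>c\<in>T. w b c)))" using assms(2) by simp
  finally show ?thesis by (simp add: mult_ac)
qed



lemma prof_upd: "s \<in> PiE N S \<Longrightarrow> p \<in> N \<Longrightarrow> a \<in> S p \<Longrightarrow> s(p := a) \<in> PiE N S"
  by (auto simp: PiE_iff extensional_def)

lemma CE_exists:
  assumes "finite_game N S"
  shows "\<exists>c. c \<in> CE_P N S u N"
proof -
  have finN: "finite N" and finS: "\<forall>p\<in>N. finite (S p)" and neS: "\<forall>p\<in>N. S p \<noteq> {}"
    using assms by (auto simp: finite_game_def)
  define P where "P = PiE N S"
  have finP: "finite P" using finN finS by (simp add: P_def finite_PiE)
  have neP: "P \<noteq> {}" using neS by (simp add: P_def PiE_eq_empty_iff)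
  define R where "R = Sigma N (\<lambda>p. S p \<times> S p)"
  have finR: "finite R" using finN finS by (simp add: R_def)
  define A where "A s r = (case r of (p, a, b) \<Rightarrow> if s p = a then u p s - u p (s(p := b)) else 0)" for s r
  from ville[OF finR finP neP, of A] show ?thesis
  proof
    assume "\<exists>x. (\<forall>j\<in>P. 0 \<le> x j) \<and> sum x P = 1 \<and> (\<forall>i\<in>R. 0 \<le> (\<Sum>j\<in>P. x j * A j i))"
    then obtain x where x: "\<forall>j\<in>P. 0 \<le> x j" "sum x P = 1" "\<forall>i\<in>R. 0 \<le> (\<Sum>j\<in>P. x j * A j i)" by blast
    have "\<forall>p\<in>N. \<forall>a\<in>S p. \<forall>b\<in>S p. a \<noteq> b \<longrightarrow>
       0 \<le> (\<Sum>s\<in>{s\<in>PiE N S. s p = a}. x s * (u p s - u p (s(p := b))))"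
    proof (intro ballI impI)
      fix p a b assume pab: "p \<in> N" "a \<in> S p" "b \<in> S p" "a \<noteq> b"
      have "(\<Sum>s\<in>{s \<in> PiE N S. s p = a}. x s * (u p s - u p (s(p := b))))
          = (\<Sum>s\<in>P. if s p = a then x s * (u p s - u p (s(p := b))) else 0)"
        using finP by (simp add: P_def sum.inter_filter)
      also have "\<dots> = (\<Sum>s\<in>P. x s * A s (p, a, b))" by (intro sum.cong) (auto simp: A_def)
      also have "\<dots> \<ge> 0" using x(3) pab by (auto simp: R_def)
      finally show "0 \<le> (\<Sum>s\<in>{s \<in> PiE N S. s p = a}. x s * (u p s - u p (s(p := b))))" .
    qed
    then have "x \<in> CE_P N S u N" using x by (simp add: CE_P_def distributions_def profiles_def P_def)
    then show ?thesis by blast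
  next
    assume "\<exists>y. (\<forall>i\<in>R. 0 \<le> y i) \<and> (\<forall>j\<in>P. (\<Sum>i\<in>R. y i * A j i) < 0)"
    then obtain y where y: "\<forall>i\<in>R. 0 \<le> y i" "\<forall>s\<in>P. (\<Sum>i\<in>R. y i * A s i) < 0" by blast
    define w where "w p a b = y (p, a, b)" for p a b
    have "\<forall>p\<in>N. \<exists>q. (\<forall>a\<in>S p. 0 \<le> q a) \<and> sum q (S p) = 1 \<and>
        (\<forall>b\<in>S p. (\<Sum>a\<in>S p. q a * w p a b) = q b * (\<Sum>c\<in>S p. w p b c))"
    proof
      fix p assume p: "p \<in> N"
      show "\<exists>q. (\<forall>a\<in>S p. 0 \<le> q a) \<and> sum q (S p) = 1 \<and>
        (\<forall>b\<in>S p. (\<Sum>a\<in>S p. q a * w p a b) = q b * (\<Sum>c\<in>S p. w p b c))"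
        using p finS neS y(1) by (intro stationary) (auto simp: w_def R_def)
    qed
    from bchoice[OF this] obtain Q where Q: "\<forall>p\<in>N. (\<forall>a\<in>S p. 0 \<le> Q p a) \<and> sum (Q p) (S p) = 1 \<and>
        (\<forall>b\<in>S p. (\<Sum>a\<in>S p. Q p a * w p a b) = Q p b * (\<Sum>c\<in>S p. w p b c))" by blast
    define x where "x s = (\<Prod>q\<in>N. Q q (s q))" for s
    define F where "F s = (\<Sum>i\<in>R. y i * A s i)" for s
    have xnn: "0 \<le> x s" if "s \<in> P" for s
      using that Q by (auto simp: x_def P_def intro!: prod_nonneg dest: PiE_mem)
    have xsum: "sum x P = 1"
    proof -
      have "sum x P = (\<Prod>q\<in>N. \<Sum>a\<in>S q. Q q a)"
        unfolding x_def P_def using finN finS by (subst prod_sum_PiE) auto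
      also have "\<dots> = 1" using Q by (intro prod.neutral) auto
      finally show ?thesis .
    qed
    have neg: "(\<Sum>s\<in>P. x s * F s) < 0"
    proof -
      have "\<exists>s0\<in>P. x s0 \<noteq> 0"
      proof (rule ccontr)
        assume "\<not> (\<exists>s0\<in>P. x s0 \<noteq> 0)"
        then have "sum x P = 0" by simp
        then show False using xsum by simp
      qed
      then obtain s0 where s0: "s0 \<in> P" "x s0 \<noteq> 0" by blast
      have "x s0 > 0" using xnn[OF s0(1)] s0(2) by simp
      then have "x s0 * F s0 < 0" using y(2) s0(1) by (simp add: F_def mult_pos_neg)
      moreover have "(\<Sum>s\<in>P - {s0}. x s * F s) \<le> 0"
        using xnn y(2) by (intro sum_nonpos) (auto simp: F_def mult_nonneg_nonpos)
      moreover have "(\<Sum>s\<in>P. x s * F s) = x s0 * F s0 + (\<Sum>s\<in>P - {s0}. x s * F s)"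
        using finP s0(1) by (rule sum.remove)
      ultimately show ?thesis by simp
    qed
    define H where "H p s = (\<Sum>b\<in>S p. w p (s p) b * (u p s - u p (s(p := b))))" for p s
    have FH: "F s = (\<Sum>p\<in>N. H p s)" if "s \<in> P" for s
    proof -
      have "F s = (\<Sum>p\<in>N. \<Sum>ab\<in>S p \<times> S p. y (p, ab) * A s (p, ab))"
        unfolding F_def R_def using finN finS by (subst sum.Sigma) auto
      also have "\<dots> = (\<Sum>p\<in>N. H p s)"
      proof (rule sum.cong[OF refl])
        fix p assume p: "p \<in> N"
        have sp: "s p \<in> S p" using that p by (auto simp: P_def dest: PiE_mem)
        have "(\<Sum>ab\<in>S p \<times> S p. y (p, ab) * A s (p, ab))
            = (\<Sum>a\<in>S p. \<Sum>b\<in>S p. y (p, a, b) * A s (p, a, b))"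
          using finS p by (subst sum.cartesian_product) auto
        also have "\<dots> = (\<Sum>a\<in>S p. if a = s p then (\<Sum>b\<in>S p. w p a b * (u p s - u p (s(p := b)))) else 0)"
          by (intro sum.cong refl) (auto simp: A_def w_def)
        also have "\<dots> = H p s" using finS p sp by (simp add: sum.delta H_def)
        finally show "(\<Sum>ab\<in>S p \<times> S p. y (p, ab) * A s (p, ab)) = H p s" .
      qed
      finally show ?thesis .
    qed
    have Hzero: "(\<Sum>s\<in>P. x s * H p s) = 0" if p: "p \<in> N" for p
    proof -
      define G where "G = PiE (N - {p}) S"
      define X where "X g = (\<Prod>q\<in>N - {p}. Q q (g q))" for g
      define U where "U g a = u p (g(p := a))" for g a
      have xg: "x (g(p := a)) = Q p a * X g" for g a
      proof -
        have "x (g(p := a)) = Q p a * (\<Prod>q\<in>N - {p}. Q q ((g(p := a)) q))"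
          unfolding x_def using finN p by (subst prod.remove) auto
        also have "(\<Prod>q\<in>N - {p}. Q q ((g(p := a)) q)) = X g"
          unfolding X_def by (intro prod.cong) auto
        finally show ?thesis .
      qed
      have Hg: "H p (g(p := a)) = (\<Sum>b\<in>S p. w p a b * (U g a - U g b))" for g a
        by (simp add: H_def U_def)
      have "(\<Sum>s\<in>P. x s * H p s) = (\<Sum>a\<in>S p. \<Sum>g\<in>G. x (g(p := a)) * H p (g(p := a)))"
        unfolding P_def G_def using finN p finS by (rule sum_PiE_split)
      also have "\<dots> = (\<Sum>a\<in>S p. \<Sum>g\<in>G. X g * (\<Sum>b\<in>S p. Q p a * w p a b * (U g a - U g b)))"
        by (simp add: xg Hg sum_distrib_left mult_ac)
      also have "\<dots> = (\<Sum>g\<in>G. X g * (\<Sum>a\<in>S p. \<Sum>b\<in>S p. Q p a * w p a b * (U g a - U g b)))"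
        by (subst sum.swap) (simp add: sum_distrib_left)
      also have "\<dots> = 0"
      proof -
        have "(\<Sum>a\<in>S p. \<Sum>b\<in>S p. Q p a * w p a b * (U g a - U g b)) = 0" for g
          using finS p Q by (intro stat_zero) auto
        then show ?thesis by simp
      qed
      finally show ?thesis .
    qed
    have "(\<Sum>s\<in>P. x s * F s) = (\<Sum>s\<in>P. \<Sum>p\<in>N. x s * H p s)"
      using FH by (simp add: sum_distrib_left)
    also have "\<dots> = (\<Sum>p\<in>N. \<Sum>s\<in>P. x s * H p s)" by (rule sum.swap)
    also have "\<dots> = 0" using Hzero by simp
    finally show ?thesis using neg by simp
  qed
qed



lemma single:
  assumes game: "finite_game N S" and xC: "x \<in> CCE N S u" and p: "p \<in> N"
  shows "\<exists>z. z \<in> CE_P N S u {p} \<and> exp_util N S u p z \<le> exp_util N S u p x"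
proof -
  have finN: "finite N" and finS: "\<forall>p\<in>N. finite (S p)" and neS: "\<forall>p\<in>N. S p \<noteq> {}"
    using game by (auto simp: finite_game_def)
  define P where "P = PiE N S"
  define G where "G = PiE (N - {p}) S"
  have xnn: "\<forall>s\<in>P. 0 \<le> x s" and xsum: "sum x P = 1"
    and cce: "\<forall>b\<in>S p. 0 \<le> (\<Sum>s\<in>P. x s * (u p s - u p (s(p := b))))"
    using xC p by (auto simp: CCE_def distributions_def profiles_def P_def)
  have split: "(\<Sum>s\<in>P. f s) = (\<Sum>a\<in>S p. \<Sum>g\<in>G. f (g(p := a)))" for f :: "_ \<Rightarrow> real"
    unfolding P_def G_def using finN p finS by (rule sum_PiE_split)
  have Nins: "insert p (N - {p}) = N" using p by auto
  have gP: "g(p := a) \<in> P" if "g \<in> G" "a \<in> S p" for g a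
  proof -
    have "g(p := a) \<in> PiE (insert p (N - {p})) S" using that by (intro PiE_fun_upd) (auto simp: G_def)
    then show ?thesis using Nins by (simp add: P_def)
  qed
  have garb: "g p = undefined" if "g \<in> G" for g
    using that unfolding G_def by (rule PiE_arb) simp
  define m where "m g = (\<Sum>a\<in>S p. x (g(p := a)))" for g
  define D where "D b = (\<Sum>g\<in>G. m g * u p (g(p := b)))" for b
  have Dx: "D b = (\<Sum>s\<in>P. x s * u p (s(p := b)))" for b
  proof -
    have "(\<Sum>s\<in>P. x s * u p (s(p := b))) = (\<Sum>a\<in>S p. \<Sum>g\<in>G. x (g(p := a)) * u p (g(p := b)))"
      by (simp add: split)
    also have "\<dots> = D b" unfolding D_def m_def
      by (subst sum.swap) (simp add: sum_distrib_right)
    finally show ?thesis by simp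
  qed
  have Dle: "D b \<le> exp_util N S u p x" if "b \<in> S p" for b
  proof -
    have "0 \<le> (\<Sum>s\<in>P. x s * u p s) - (\<Sum>s\<in>P. x s * u p (s(p := b)))"
      using cce that by (simp add: right_diff_distrib sum_subtractf)
    then show ?thesis by (simp add: Dx exp_util_def profiles_def P_def)
  qed
  have "Max (D ` S p) \<in> D ` S p" using finS neS p by simp
  then obtain bs where bs: "bs \<in> S p" "D bs = Max (D ` S p)" by auto
  have Dmax: "D b \<le> D bs" if "b \<in> S p" for b using bs finS p that by simp
  define z where "z s = (if s p = bs then m (s(p := undefined)) else 0)" for s
  have zg: "z (g(p := a)) = (if a = bs then m g else 0)" if "g \<in> G" for g a
    using garb[OF that] by (simp add: z_def fun_upd_idem)
  have mnn: "0 \<le> m g" if "g \<in> G" for g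
    unfolding m_def using xnn gP that by (intro sum_nonneg) auto
  have zsum: "(\<Sum>s\<in>P. z s * h s) = (\<Sum>g\<in>G. m g * h (g(p := bs)))" for h
  proof -
    have "(\<Sum>s\<in>P. z s * h s) = (\<Sum>a\<in>S p. \<Sum>g\<in>G. (if a = bs then m g else 0) * h (g(p := a)))"
      by (simp add: split zg cong: sum.cong)
    also have "\<dots> = (\<Sum>g\<in>G. \<Sum>a\<in>S p. (if a = bs then m g * h (g(p := a)) else 0))"
      by (subst sum.swap, intro sum.cong refl) simp
    also have "\<dots> = (\<Sum>g\<in>G. m g * h (g(p := bs)))"
      using bs(1) finS p by (simp add: sum.delta)
    finally show ?thesis .
  qed
  have "z \<in> CE_P N S u {p}"
  proof -
    have "\<forall>s\<in>P. 0 \<le> z s"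
    proof
      fix s assume s: "s \<in> P"
      have "s \<in> PiE (insert p (N - {p})) S" using s Nins by (simp add: P_def)
      then have "s(p := undefined) \<in> G" unfolding G_def by (intro fun_upd_in_PiE) auto
      then show "0 \<le> z s" using mnn by (simp add: z_def)
    qed
    moreover have "sum z P = 1"
    proof -
      have "sum z P = (\<Sum>g\<in>G. m g)" using zsum[of "\<lambda>_. 1"] by simp
      also have "\<dots> = sum x P" unfolding m_def by (simp add: split) (rule sum.swap)
      finally show ?thesis using xsum by simp
    qed
    moreover have "\<forall>a\<in>S p. \<forall>b\<in>S p. a \<noteq> b \<longrightarrow>
       0 \<le> (\<Sum>s\<in>{s\<in>P. s p = a}. z s * (u p s - u p (s(p := b))))"
    proof (intro ballI impI)
      fix a b assume ab: "a \<in> S p" "b \<in> S p" "a \<noteq> b"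
      have finP: "finite P" using finN finS by (simp add: P_def finite_PiE)
      have "(\<Sum>s\<in>{s\<in>P. s p = a}. z s * (u p s - u p (s(p := b))))
          = (\<Sum>s\<in>P. z s * (if s p = a then u p s - u p (s(p := b)) else 0))"
      proof -
        have "(\<Sum>s\<in>{s\<in>P. s p = a}. z s * (u p s - u p (s(p := b))))
          = (\<Sum>s\<in>P. if s p = a then z s * (u p s - u p (s(p := b))) else 0)"
          using finP by (rule sum.inter_filter)
        also have "\<dots> = (\<Sum>s\<in>P. z s * (if s p = a then u p s - u p (s(p := b)) else 0))"
          by (intro sum.cong) auto
        finally show ?thesis .
      qed
      also have "\<dots> = (\<Sum>g\<in>G. m g * (if (g(p := bs)) p = a then u p (g(p := bs)) - u p ((g(p := bs))(p := b)) else 0))"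
        by (rule zsum)
      also have "\<dots> = (\<Sum>g\<in>G. m g * (if bs = a then u p (g(p := bs)) - u p (g(p := b)) else 0))"
        by (intro sum.cong refl) simp
      also have "\<dots> \<ge> 0"
      proof (cases "bs = a")
        case True
        have "(\<Sum>g\<in>G. m g * (u p (g(p := bs)) - u p (g(p := b)))) = D bs - D b"
          by (simp add: D_def right_diff_distrib sum_subtractf)
        then show ?thesis using True Dmax[OF ab(2)] by simp
      qed simp
      finally show "0 \<le> (\<Sum>s\<in>{s\<in>P. s p = a}. z s * (u p s - u p (s(p := b))))" .
    qed
    ultimately show ?thesis by (simp add: CE_P_def distributions_def profiles_def P_def)
  qed
  moreover have "exp_util N S u p z \<le> exp_util N S u p x"
  proof -
    have "exp_util N S u p z = D bs"
      unfolding exp_util_def profiles_def P_def[symmetric] by (simp add: zsum D_def)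
    then show ?thesis using Dle[OF bs(1)] by simp
  qed
  ultimately show ?thesis by blast
qed

lemma CE_P_mono: "P \<subseteq> Q \<Longrightarrow> CE_P N S u Q \<subseteq> CE_P N S u P"
  unfolding CE_P_def by blast

theorem mainTheorem17:
  fixes N :: "'p set" and S :: "'p \<Rightarrow> 's set" and u :: "'p \<Rightarrow> ('p \<Rightarrow> 's) \<Rightarrow> real"
  assumes "finite_game N S"
  shows "CCE N S u \<subseteq> S_NF N S u"
proof
  fix x assume xC: "x \<in> CCE N S u"
  obtain c where c: "c \<in> CE_P N S u N" using CE_exists[OF assms] by blast
  have "\<forall>p\<in>N. \<exists>z. z \<in> CE_P N S u {p} \<and> exp_util N S u p z \<le> exp_util N S u p x"
    using single[OF assms xC] by blast
  from bchoice[OF this] obtain Z where Z: "\<forall>p\<in>N. Z p \<in> CE_P N S u {p} \<and> exp_util N S u p (Z p) \<le> exp_util N S u p x"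
    by blast
  define xx where "xx \<pi> = (if \<pi> = [] then x else if length \<pi> = 1 then Z (hd \<pi>) else c)" for \<pi> :: "'p list"
  have "xx \<in> SG_X N S u N {}"
    unfolding SG_X_def
  proof (intro CollectI ballI)
    fix \<pi> assume "\<pi> \<in> ordered_subsets N"
    then have sub: "set \<pi> \<subseteq> N" by (simp add: ordered_subsets_def)
    show "xx \<pi> \<in> CE_P N S u (set \<pi> \<union> {})"
    proof (cases "\<pi> = []")
      case True
      then show ?thesis using xC by (simp add: xx_def CE_P_def CCE_def)
    next
      case False
      show ?thesis
      proof (cases "length \<pi> = 1")
        case True
        then obtain p where "\<pi> = [p]" by (cases \<pi>) auto
        then show ?thesis using Z sub by (simp add: xx_def)
      next
        case False
        then show ?thesis using \<open>\<pi> \<noteq> []\<close> c CE_P_mono[OF sub] by (auto simp: xx_def)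
      qed
    qed
  qed
  moreover have "stable_at N S u N xx []"
    using Z by (simp add: stable_at_def xx_def)
  ultimately have "xx \<in> SG_X_stable N S u N {}" by (simp add: SG_X_stable_def)
  moreover have "xx [] = x" by (simp add: xx_def)
  ultimately show "x \<in> S_NF N S u" unfolding S_NF_def by blast
qed

end
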